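(* Let $F$ be an algebraically closed field of characteristic zero, $A(x)$ a nonsingular $n\times n$ matrix over $F[x]$, and $P(x),Q(x)$ invertible matrices over $F[x]$ with $P(x)A(x)Q(x)=\Phi(x)=\mathrm{diag}(\varphi_1(x),\dots,\varphi_n(x))$, the Smith form of $A(x)$ with monic diagonal entries. Let $s\ge1$ be an integer. Then there exists an invertible $U(x)$ over $F[x]$ with $A(x)U(x)=Ix^s-D_{s-1}x^{s-1}-\dots-D_0$ for some $D_i\in M_n(F)$ if and only if (1) $\deg\det A(x)=ns$ and (2) $\det M_{P(x)\,\|I\ \ Ix\ \ \cdots\ \ Ix^{s-1}\|}(\Phi)\neq0$, where $\|I\ Ix\ \cdots\ Ix^{s-1}\|$ is the $n\times ns$ block row matrix.
   Context: For a $1\times m$ row $g(x)$ over $F[x]$ and a monic $\varphi(x)=\prod_{j=1}^r(x-\alpha_j)^{k_j}$ with distinct $\alpha_j\in F$, $M_{g}(\varphi)$ is the $(\deg\varphi)\times m$ matrix over $F$ obtained by stacking, for $j=1,\dots,r$, the rows $g(\alpha_j),g'(\alpha_j),\dots,g^{(k_j-1)}(\alpha_j)$ (entrywise derivatives); it is empty if $\deg\varphi=0$. For an $n\times m$ matrix $G(x)$ with rows $g_1(x),\dots,g_n(x)$ and $\Phi=\mathrm{diag}(\varphi_1,\dots,\varphi_n)$ with monic $\varphi_i$, $M_{G}(\Phi)$ is the matrix obtained by stacking $M_{g_1}(\varphi_1),\dots,M_{g_n}(\varphi_n)$; it has $\deg\det\Phi$ rows (the ordering of roots affects it only by a row permutation).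 The Smith form of $A(x)$ is a diagonal matrix $\mathrm{diag}(\varphi_1,\dots,\varphi_n)$, $\varphi_i\mid\varphi_{i+1}$, equivalent to $A(x)$. *)

theory Defs
  imports "HOL-Computational_Algebra.Polynomial" "Jordan_Normal_Form.Determinant"
begin

text \<open>A fixed enumeration (without repetition) of the distinct roots of a polynomial.
  The choice of ordering only permutes rows of the resulting matrix.\<close>
definition root_list :: "'a::field poly \<Rightarrow> 'a list" where
  "root_list p = (SOME xs. distinct xs \<and> set xs = {a. poly p a = 0})"

text \<open>Rows of M_g(phi): for each distinct root alpha of phi (with multiplicity k = order alpha phi),
  the rows g(alpha), g'(alpha), ..., g^(k-1)(alpha) (entrywise derivatives).
  The row g is given as a 1 x m matrix, i.e. as a vector of length m.\<close>
definition M_rows :: "'a::field poly vec \<Rightarrow> 'a poly \<Rightarrow> 'a vec list" where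
  "M_rows g \<phi> = concat (map (\<lambda>\<alpha>. map (\<lambda>k. vec (dim_vec g) (\<lambda>c. poly ((pderiv ^^ k) (g $ c)) \<alpha>))
                                    [0..<order \<alpha> \<phi>]) (root_list \<phi>))"

text \<open>M_G(Phi) for an n x m matrix G and Phi = diag(phi 0, ..., phi (n-1)):
  stack M_{g_1}(phi_1), ..., M_{g_n}(phi_n).\<close>
definition M_mat :: "'a::field poly mat \<Rightarrow> (nat \<Rightarrow> 'a poly) \<Rightarrow> 'a mat" where
  "M_mat G \<phi> = mat_of_rows (dim_col G) (concat (map (\<lambda>i. M_rows (row G i) (\<phi> i)) [0..<dim_row G]))"

definition diag_poly_mat :: "nat \<Rightarrow> (nat \<Rightarrow> 'a::zero) \<Rightarrow> 'a mat" where
  "diag_poly_mat n \<phi> = mat n n (\<lambda>(i,j). if i = j then \<phi> i else 0)"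

definition block_row_powers :: "nat \<Rightarrow> nat \<Rightarrow> 'a::comm_ring_1 poly mat" where
  "block_row_powers n s = mat n (n * s) (\<lambda>(i,j). if j mod n = i then monom 1 (j div n) else 0)"

definition monic_mat_poly :: "nat \<Rightarrow> nat \<Rightarrow> (nat \<Rightarrow> 'a::comm_ring_1 mat) \<Rightarrow> 'a poly mat" where
  "monic_mat_poly n s D = mat n n (\<lambda>(i,j). (if i = j then monom 1 s else 0) - (\<Sum>k<s. monom (D k $$ (i,j)) k))"

end

theory Submission
  imports Defs
begin


lemma funpow_pderiv_0: "(pderiv ^^ k) 0 = (0::'a::idom poly)"
  by (induction k) (auto simp: pderiv_0)

lemma order_deriv_iff:
  fixes p :: "'a::field_char_0 poly"
  assumes "p \<noteq> 0"
  shows "(m \<le> order \<alpha> p) = (\<forall>k<m. poly ((pderiv ^^ k) p) \<alpha> = 0)"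
  using assms
proof (induction m arbitrary: p)
  case 0 then show ?case by simp
next
  case (Suc m)
  have sh: "(\<forall>k<Suc m. poly ((pderiv ^^ k) p) \<alpha> = 0) =
     (poly p \<alpha> = 0 \<and> (\<forall>k<m. poly ((pderiv ^^ k) (pderiv p)) \<alpha> = 0))"
  proof -
    have "\<forall>k. (pderiv ^^ Suc k) p = (pderiv ^^ k) (pderiv p)"
      by (simp add: funpow_Suc_right del: funpow.simps)
    then show ?thesis by (auto simp: less_Suc_eq_0_disj simp del: funpow.simps)
  qed
  show ?case
  proof (cases "poly p \<alpha> = 0")
    case False
    then have "order \<alpha> p = 0" using order_root by blast
    then show ?thesis using sh False by simp
  next
    case True
    have d: "pderiv p \<noteq> 0"
    proof
      assume "pderiv p = 0"
      then obtain h where "p = [:h:]" using pderiv_iszero by blast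
      then show False using True Suc.prems by simp
    qed
    have "order \<alpha> p = Suc (order \<alpha> (pderiv p))"
      using order_pderiv[OF Suc.prems True] .
    then show ?thesis using sh True Suc.IH[OF d] by simp
  qed
qed

lemma dvd_by_orders:
  fixes \<phi> p :: "'a::alg_closed_field poly"
  assumes "\<phi> \<noteq> 0" "p \<noteq> 0" "\<And>\<alpha>. order \<alpha> \<phi> \<le> order \<alpha> p"
  shows "\<phi> dvd p"
  using assms
proof (induction "degree \<phi>" arbitrary: \<phi> p rule: less_induct)
  case (less \<phi>)
  show ?case
  proof (cases "degree \<phi> = 0")
    case True
    then have "is_unit \<phi>" using less.prems(1) by (simp add: is_unit_iff_degree)
    then show ?thesis by (simp add: unit_imp_dvd)
  next
    case False
    then obtain x where x: "poly \<phi> x = 0" using alg_closed_imp_poly_has_root by blast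
    then obtain \<psi> where \<psi>: "\<phi> = [:-x,1:] * \<psi>" using poly_eq_0_iff_dvd by (metis dvdE)
    have \<psi>0: "\<psi> \<noteq> 0" using less.prems(1) \<psi> by auto
    have "degree ([:-x,1:] * \<psi>) = degree [:-x,1:] + degree \<psi>" by (rule degree_mult_eq) (use \<psi>0 in auto)
    then have dg: "degree \<phi> = Suc (degree \<psi>)" unfolding \<psi> by simp
    have ox: "order \<alpha> [:-x,1:] = (if \<alpha> = x then 1 else 0)" for \<alpha>
      using order_power_n_n[of x 1] by (auto intro: order_0I)
    have o\<phi>: "order \<alpha> \<phi> = (if \<alpha> = x then 1 else 0) + order \<alpha> \<psi>" for \<alpha>
    proof -
      have "order \<alpha> ([:-x,1:] * \<psi>) = order \<alpha> [:-x,1:] + order \<alpha> \<psi>"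
        by (rule order_mult) (metis \<psi>0 mult_eq_0_iff pCons_eq_0_iff zero_neq_one)
      then show ?thesis unfolding \<psi> ox .
    qed
    have "order x p \<noteq> 0" using less.prems(3)[of x] o\<phi>[of x] by simp
    then have "poly p x = 0" using order_root by blast
    then obtain q where q: "p = [:-x,1:] * q" using poly_eq_0_iff_dvd by (metis dvdE)
    have q0: "q \<noteq> 0" using less.prems(2) q by auto
    have oq: "order \<alpha> p = (if \<alpha> = x then 1 else 0) + order \<alpha> q" for \<alpha>
    proof -
      have "order \<alpha> ([:-x,1:] * q) = order \<alpha> [:-x,1:] + order \<alpha> q"
        by (rule order_mult) (metis q0 mult_eq_0_iff pCons_eq_0_iff zero_neq_one)
      then show ?thesis unfolding q ox .
    qed
    have "\<psi> dvd q"
      using less.hyps[of \<psi> q] dg \<psi>0 q0 less.prems(3) o\<phi> oq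
      by (metis add_le_cancel_left lessI)
    then show ?thesis unfolding \<psi> q by (rule mult_dvd_mono[OF dvd_refl])
  qed
qed

lemma degree_eq_sum_orders:
  fixes p :: "'a::alg_closed_field poly"
  assumes "p \<noteq> 0"
  shows   "(\<Sum>x | poly p x = 0. order x p) = degree p"
  using assms
proof (induction "degree p" arbitrary: p rule: less_induct)
  case (less p)
  show ?case
  proof (cases "\<exists>x. poly p x = 0")
    case False
    then have "degree p = 0" using alg_closed_imp_poly_has_root by (metis gr0I)
    thus ?thesis using False
      by auto
  next
    case True
    then obtain x where x: "poly p x = 0"
      by auto
    have "[:-x, 1:] ^ order x p dvd p"
      by (simp add: order_1)
    then obtain q where q: "p = [:-x, 1:] ^ order x p * q"
      by (elim dvdE)
    have [simp]: "q \<noteq> 0"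
      using q less.prems by auto
    have "order x p = order x p + order x q"
      by (subst q, subst order_mult) (auto simp: order_power_n_n)
    hence "order x q = 0"
      by auto
    hence [simp]: "poly q x \<noteq> 0"
      by (simp add: order_root)
    have deg_p: "degree p = degree q + order x p"
      by (subst q, subst degree_mult_eq) (auto simp: degree_power_eq)
    moreover have "order x p > 0"
      using x less.prems by (simp add: order_root)
    ultimately have "degree q < degree p"
      by linarith
    hence "(\<Sum>x | poly q x = 0. order x q) = degree q"
      by (intro less.hyps) auto
    hence "order x p + (\<Sum>x | poly q x = 0. order x q) = degree p"
      by (simp add: deg_p)
    also have "{y. poly q y = 0} = {y. poly p y = 0} - {x}"
      by (subst q) auto
    also have "(\<Sum>y \<in> {y. poly p y = 0} - {x}. order y q) =
               (\<Sum>y \<in> {y. poly p y = 0} - {x}. order y p)"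
      by (intro sum.cong refl, subst q)
         (auto simp: order_mult order_power_n_n intro!: order_0I)
    also have "order x p + \<dots> = (\<Sum>y \<in> insert x ({y. poly p y = 0} - {x}). order y p)"
      using \<open>p \<noteq> 0\<close> by (subst sum.insert) (auto simp: poly_roots_finite)
    also have "insert x ({y. poly p y = 0} - {x}) = {y. poly p y = 0}"
      using \<open>poly p x = 0\<close> by auto
    finally show ?thesis by simp
  qed
qed

lemma hermite:
  fixes \<phi> p :: "'a::{alg_closed_field,field_char_0} poly"
  assumes "\<phi> \<noteq> 0"
  shows "(\<forall>\<alpha> k. k < order \<alpha> \<phi> \<longrightarrow> poly ((pderiv ^^ k) p) \<alpha> = 0) \<longleftrightarrow> \<phi> dvd p"
proof (cases "p = 0")
  case True then show ?thesis by (simp add: funpow_pderiv_0)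
next
  case False
  have "(\<forall>\<alpha> k. k < order \<alpha> \<phi> \<longrightarrow> poly ((pderiv ^^ k) p) \<alpha> = 0) \<longleftrightarrow> (\<forall>\<alpha>. order \<alpha> \<phi> \<le> order \<alpha> p)"
    using order_deriv_iff[OF False] by blast
  also have "\<dots> \<longleftrightarrow> \<phi> dvd p"
  proof
    assume "\<forall>\<alpha>. order \<alpha> \<phi> \<le> order \<alpha> p" then show "\<phi> dvd p"
      using dvd_by_orders[OF assms False] by blast
  next
    assume d: "\<phi> dvd p"
    show "\<forall>\<alpha>. order \<alpha> \<phi> \<le> order \<alpha> p"
    proof
      fix \<alpha>
      have "[:-\<alpha>,1:] ^ order \<alpha> \<phi> dvd p" using order_1 d dvd_trans by blast
      then show "order \<alpha> \<phi> \<le> order \<alpha> p" using False order_divides by blast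
    qed
  qed
  finally show ?thesis .
qed

lemma root_list:
  fixes \<phi> :: "'a::field poly"
  assumes "\<phi> \<noteq> 0"
  shows "distinct (root_list \<phi>) \<and> set (root_list \<phi>) = {a. poly \<phi> a = 0}"
proof -
  have "\<exists>xs. distinct xs \<and> set xs = {a. poly \<phi> a = 0}"
    using finite_distinct_list[OF poly_roots_finite[OF assms]] by metis
  then show ?thesis unfolding root_list_def by (rule someI_ex)
qed



lemma degree_of_int_mult_le: "degree (of_int k * (X :: 'a::comm_ring_1 poly)) \<le> degree X"
proof -
  have "degree (of_int k * X) \<le> degree (of_int k :: 'a poly) + degree X" by (rule degree_mult_le)
  moreover have "degree (of_int k :: 'a poly) = 0" by (simp add: of_int_poly)
  ultimately show ?thesis by simp
qed

lemma monic_entry: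
  "i < n \<Longrightarrow> j < n \<Longrightarrow> monic_mat_poly n s D $$ (i,j) =
     (if i = j then monom 1 s else 0) - (\<Sum>k<s. monom (D k $$ (i,j)) k)"
  unfolding monic_mat_poly_def by simp

lemma degree_R: "s \<ge> 1 \<Longrightarrow> degree (\<Sum>k<s. monom (c k :: 'a::field) k) < s"
proof -
  assume s: "s \<ge> 1"
  have "degree (\<Sum>k<s. monom (c k) k) \<le> s - 1"
    by (rule degree_sum_le) (auto intro: order.trans[OF degree_monom_le])
  then show ?thesis using s by linarith
qed

lemma det_monic:
  fixes D :: "nat \<Rightarrow> 'a::field mat"
  assumes s: "s \<ge> 1"
  shows "degree (det (monic_mat_poly n s D)) = n * s \<and> det (monic_mat_poly n s D) \<noteq> 0"
proof -
  let ?L = "monic_mat_poly n s D"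
  have Lc: "?L \<in> carrier_mat n n" unfolding monic_mat_poly_def by simp
  let ?t = "\<lambda>p. \<Prod>i = 0..<n. ?L $$ (i, p i)"
  have dle: "degree (?L $$ (i,j)) \<le> s" if "i < n" "j < n" for i j
  proof -
    have "degree ((if i = j then monom 1 s else 0) - (\<Sum>k<s. monom (D k $$ (i,j)) k)) \<le> s"
      using degree_R[OF s, of "\<lambda>k. D k $$ (i,j)"]
      by (intro degree_diff_le) (auto intro: order.trans[OF degree_monom_le])
    then show ?thesis using that by (simp add: monic_entry)
  qed
  have dlt: "degree (?L $$ (i,j)) < s" if "i < n" "j < n" "i \<noteq> j" for i j
    using that degree_R[OF s, of "\<lambda>k. D k $$ (i,j)"] by (simp add: monic_entry)
  have cdiag: "coeff (?L $$ (i,i)) s = 1" if "i < n" for i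
  proof -
    have "coeff (\<Sum>k<s. monom (D k $$ (i,i)) k) s = 0"
      using degree_R[OF s, of "\<lambda>k. D k $$ (i,i)"] by (simp add: coeff_eq_0)
    then show ?thesis using that by (simp add: monic_entry)
  qed
  have ddiag: "degree (?L $$ (i,i)) = s" and nz: "?L $$ (i,i) \<noteq> 0" if "i < n" for i
  proof -
    show "degree (?L $$ (i,i)) = s" using dle[OF that that] cdiag[OF that]
      by (metis le_antisym le_degree zero_neq_one)
    then show "?L $$ (i,i) \<noteq> 0" using cdiag[OF that] by auto
  qed
  have tle: "degree (?t p) \<le> n * s" and tlt: "p \<noteq> id \<Longrightarrow> degree (?t p) < n * s"
    if p: "p permutes {0..<n}" for p
  proof -
    have pn: "p i < n" if "i < n" for i using p that permutes_in_image by fastforce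
    have dsum: "degree (?t p) \<le> (\<Sum>i=0..<n. degree (?L $$ (i, p i)))"
      using degree_prod_sum_le[of "{0..<n}" "\<lambda>i. ?L $$ (i, p i)"] by (simp add: o_def)
    moreover have "(\<Sum>i=0..<n. degree (?L $$ (i, p i))) \<le> (\<Sum>i=0..<n. s)"
      by (intro sum_mono) (auto intro: dle pn)
    ultimately show "degree (?t p) \<le> n * s" by simp
    assume "p \<noteq> id"
    then obtain i0 where i0: "p i0 \<noteq> i0" by (auto simp: fun_eq_iff)
    then have i0n: "i0 < n" using p by (meson atLeastLessThan_iff permutes_not_in zero_le)
    have "(\<Sum>i=0..<n. degree (?L $$ (i, p i))) < (\<Sum>i=0..<n. s)"
      by (rule sum_strict_mono_ex1) (use i0 i0n pn in \<open>auto intro: dle intro!: bexI[of _ i0] dlt\<close>)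
    with dsum show "degree (?t p) < n * s" by simp
  qed
  have tid: "coeff (?t id) (n * s) = 1"
  proof -
    have "degree (?t id) = (\<Sum>i=0..<n. degree (?L $$ (i, i)))"
      by (simp add: degree_prod_eq_sum_degree nz)
    also have "\<dots> = n * s" by (simp add: ddiag)
    finally have "degree (?t id) = n * s" .
    moreover have "lead_coeff (?t id) = 1"
      by (simp add: lead_coeff_prod ddiag cdiag)
    ultimately show ?thesis by simp
  qed
  have det: "det ?L = (\<Sum>p\<in>{p. p permutes {0..<n}}. signof p * ?t p)"
    by (rule det_def'[OF Lc])
  have fin: "finite {p. p permutes {0..<n}}" by (simp add: finite_permutations)
  have "degree (det ?L) \<le> n * s"
    unfolding det by (rule degree_sum_le[OF fin]) (auto intro: order.trans[OF degree_of_int_mult_le] tle)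
  moreover have "coeff (det ?L) (n * s) = 1"
  proof -
    have "coeff (det ?L) (n * s) = (\<Sum>p\<in>{p. p permutes {0..<n}}. coeff (signof p * ?t p) (n * s))"
      unfolding det by (simp add: coeff_sum)
    also have "\<dots> = coeff (signof id * ?t id) (n * s)"
    proof (rule sum.remove[OF fin, THEN trans])
      show "id \<in> {p. p permutes {0..<n}}" by (simp add: permutes_id)
      have "coeff (signof p * ?t p) (n * s) = 0" if "p permutes {0..<n}" "p \<noteq> id" for p
        by (rule coeff_eq_0) (use degree_of_int_mult_le[of "sign p" "?t p"] tlt[OF that] in linarith)
      then show "coeff (signof id * ?t id) (n * s) + (\<Sum>p\<in>{p. p permutes {0..<n}} - {id}. coeff (signof p * ?t p) (n * s))
         = coeff (signof id * ?t id) (n * s)" by (subst sum.neutral) auto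
    qed
    also have "\<dots> = 1" using tid by simp
    finally show ?thesis .
  qed
  ultimately show ?thesis by (metis coeff_0 le_antisym le_degree zero_neq_one)
qed



lemma monic_mult_vec_entry:
  assumes w: "w \<in> carrier_vec n" and i: "i < n"
  shows "(monic_mat_poly n s D *\<^sub>v w) $ i = (\<Sum>j<n. monic_mat_poly n s D $$ (i,j) * w $ j)"
  using w i unfolding monic_mat_poly_def by (simp add: scalar_prod_def lessThan_atLeast0)

lemma monic_mult_vec_zero:
  fixes D :: "nat \<Rightarrow> 'a::field mat"
  assumes s: "s \<ge> 1" and w: "w \<in> carrier_vec n"
    and deg: "\<And>i. i < n \<Longrightarrow> degree ((monic_mat_poly n s D *\<^sub>v w) $ i) < s"
  shows "w = 0\<^sub>v n"
proof (rule ccontr)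
  assume w0: "w \<noteq> 0\<^sub>v n"
  then obtain j0 where j0: "j0 < n" "w $ j0 \<noteq> 0" using w by (metis eq_vecI index_zero_vec carrier_vecD)
  define d where "d = Max ((\<lambda>j. degree (w $ j)) ` {..<n})"
  have dj: "degree (w $ j) \<le> d" if "j < n" for j unfolding d_def using that by (intro Max_ge) auto
  obtain i0 where i0: "i0 < n" "coeff (w $ i0) d \<noteq> 0"
  proof -
    have "d \<in> (\<lambda>j. degree (w $ j)) ` {..<n}" unfolding d_def using j0 by (intro Max_in) auto
    then obtain i1 where i1: "i1 < n" "degree (w $ i1) = d" by auto
    show ?thesis
    proof (cases "w $ i1 = 0")
      case False then show ?thesis using i1 that by auto
    next
      case True
      then have "d = 0" using i1 by simp
      then have "degree (w $ j0) = 0" using dj[OF j0(1)] by simp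
      then show ?thesis using that[OF j0(1)] j0(2) \<open>d = 0\<close> by (metis leading_coeff_0_iff)
    qed
  qed
  let ?L = "monic_mat_poly n s D"
  have ce: "coeff (?L $$ (i0,j) * w $ j) (s + d) = (if i0 = j then coeff (w $ j) d else 0)"
    if j: "j < n" for j
  proof -
    have "coeff ((\<Sum>k<s. monom (D k $$ (i0,j)) k) * w $ j) (s + d) = 
       (\<Sum>k<s. coeff (monom (D k $$ (i0,j)) k * w $ j) (s + d))"
      by (simp add: sum_distrib_right coeff_sum)
    also have "\<dots> = 0"
    proof (rule sum.neutral, intro ballI)
      fix k assume "k \<in> {..<s}"
      then have "degree (w $ j) < s + d - k" using dj[OF j] by auto
      then show "coeff (monom (D k $$ (i0,j)) k * w $ j) (s + d) = 0"
        by (simp add: coeff_monom_mult coeff_eq_0)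
    qed
    finally show ?thesis using j i0 by (simp add: monic_entry left_diff_distrib coeff_monom_mult)
  qed
  have "coeff ((?L *\<^sub>v w) $ i0) (s + d) = coeff (w $ i0) d"
    using i0 by (simp add: monic_mult_vec_entry[OF w i0(1)] coeff_sum ce)
  then have "degree ((?L *\<^sub>v w) $ i0) \<ge> s + d" using i0 by (metis le_degree)
  then show False using deg[OF i0(1)] by simp
qed



definition Tl :: "(nat \<Rightarrow> 'a::field poly) \<Rightarrow> nat \<Rightarrow> (nat \<times> 'a \<times> nat) list" where
  "Tl \<phi> n = concat (map (\<lambda>i. concat (map (\<lambda>\<alpha>. map (\<lambda>k. (i,\<alpha>,k)) [0..<order \<alpha> (\<phi> i)])
      (root_list (\<phi> i)))) [0..<n])"

lemma concat_map_map: "concat (map (\<lambda>i. map F (C i)) xs) = map F (concat (map C xs))"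
  by (induct xs) auto

lemma M_mat_eq:
  assumes "dim_row G = n"
  shows "M_mat G \<phi> = mat_of_rows (dim_col G)
     (map (\<lambda>(i,\<alpha>,k). vec (dim_col G) (\<lambda>c. poly ((pderiv ^^ k) (G $$ (i,c))) \<alpha>)) (Tl \<phi> n))"
proof -
  let ?F = "(\<lambda>(i,\<alpha>,k). vec (dim_col G) (\<lambda>c. poly ((pderiv ^^ k) (G $$ (i,c))) \<alpha>))"
  let ?C = "\<lambda>i. concat (map (\<lambda>\<alpha>. map (\<lambda>k. (i,\<alpha>,k)) [0..<order \<alpha> (\<phi> i)]) (root_list (\<phi> i)))"
  have per: "M_rows (row G i) (\<phi> i) = map ?F (?C i)"
    if "i < n" for i
    unfolding M_rows_def map_concat using that assms
    by (auto simp: o_def intro!: arg_cong[where f=concat] map_cong eq_vecI)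
  have "map (\<lambda>i. M_rows (row G i) (\<phi> i)) [0..<n] = map (\<lambda>i. map ?F (?C i)) [0..<n]"
    by (intro map_cong refl) (rule per, simp)
  then show ?thesis unfolding M_mat_def Tl_def assms by (simp only: concat_map_map)
qed

lemma mat_of_rows_mult_vec:
  "\<forall>r\<in>set rs. dim_vec r = m \<Longrightarrow> dim_vec c = m \<Longrightarrow> mat_of_rows m rs *\<^sub>v c = vec (length rs) (\<lambda>r. rs ! r \<bullet> c)"
  by (rule eq_vecI) (auto simp: mult_mat_vec_def row_def mat_of_rows_def scalar_prod_def)

lemma pderiv_sum: "pderiv (sum f S) = (\<Sum>x\<in>S. pderiv (f x))"
  by (induction S rule: infinite_finite_induct) (auto simp: pderiv_add pderiv_0)

lemma funpow_pderiv_sum: "(pderiv ^^ k) (sum f S) = (\<Sum>x\<in>S. (pderiv ^^ k) (f x))"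
  by (induction k arbitrary: f) (auto simp: pderiv_sum)

lemma funpow_pderiv_smult: "(pderiv ^^ k) (smult a p) = smult a ((pderiv ^^ k) p)"
  by (induction k) (auto simp: pderiv_smult)

lemma funpow_pderiv_diff: "(pderiv ^^ k) (p - q) = (pderiv ^^ k) p - (pderiv ^^ k) (q :: 'a::idom poly)"
  by (induction k) (auto simp: pderiv_diff)

lemma scalar_row:
  fixes G :: "'a::field poly mat"
  assumes G: "G \<in> carrier_mat n m" and c: "c \<in> carrier_vec m" and i: "i < n"
  shows "vec m (\<lambda>j. poly ((pderiv ^^ k) (G $$ (i,j))) \<alpha>) \<bullet> c
     = poly ((pderiv ^^ k) ((G *\<^sub>v map_vec (\<lambda>a. [:a:]) c) $ i)) \<alpha>"
proof -
  have "(G *\<^sub>v map_vec (\<lambda>a. [:a:]) c) $ i = (\<Sum>j\<in>{0..<m}. smult (c $ j) (G $$ (i,j)))"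
    using G c i by (auto simp: scalar_prod_def row_def intro!: sum.cong)
  then show ?thesis using c
    by (simp add: scalar_prod_def funpow_pderiv_sum funpow_pderiv_smult poly_sum mult.commute)
qed

lemma Tl_set: "(\<forall>i<n. \<phi> i \<noteq> 0) \<Longrightarrow>
   set (Tl \<phi> n) = {(i,\<alpha>,k). i < n \<and> poly (\<phi> i) \<alpha> = 0 \<and> k < order \<alpha> (\<phi> i)}"
  unfolding Tl_def using root_list by fastforce

lemma Tl_length:
  fixes \<phi> :: "nat \<Rightarrow> 'a::alg_closed_field poly"
  shows "(\<forall>i<n. \<phi> i \<noteq> 0) \<Longrightarrow> length (Tl \<phi> n) = (\<Sum>i<n. degree (\<phi> i))"
proof -
  assume nz: "\<forall>i<n. \<phi> i \<noteq> 0"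
  have "length (Tl \<phi> n) = (\<Sum>i\<leftarrow>[0..<n]. \<Sum>\<alpha>\<leftarrow>root_list (\<phi> i). order \<alpha> (\<phi> i))"
    unfolding Tl_def by (simp add: length_concat o_def)
  also have "\<dots> = (\<Sum>i\<leftarrow>[0..<n]. degree (\<phi> i))"
  proof (rule arg_cong[where f=sum_list], rule map_cong[OF refl])
    fix i assume "i \<in> set [0..<n]"
    then have "\<phi> i \<noteq> 0" using nz by auto
    then show "(\<Sum>\<alpha>\<leftarrow>root_list (\<phi> i). order \<alpha> (\<phi> i)) = degree (\<phi> i)"
      using root_list[of "\<phi> i"] degree_eq_sum_orders[of "\<phi> i"]
      by (simp add: sum_list_distinct_conv_sum_set)
  qed
  also have "\<dots> = (\<Sum>i<n. degree (\<phi> i))"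
    by (simp add: sum_list_distinct_conv_sum_set atLeast0LessThan)
  finally show ?thesis .
qed

lemma Tl_fst: "(i,\<alpha>,k) \<in> set (Tl \<phi> n) \<Longrightarrow> i < n"
  unfolding Tl_def by auto

definition Ev :: "'a::field poly mat \<Rightarrow> (nat \<Rightarrow> 'a poly) \<Rightarrow> nat \<Rightarrow> 'a poly vec \<Rightarrow> 'a vec" where
  "Ev P \<phi> n v = vec (length (Tl \<phi> n)) (\<lambda>r. case Tl \<phi> n ! r of (i,\<alpha>,k) \<Rightarrow> poly ((pderiv ^^ k) ((P *\<^sub>v v) $ i)) \<alpha>)"

lemma Ev_M:
  fixes P B :: "'a::field poly mat"
  assumes P: "P \<in> carrier_mat n n" and B: "B \<in> carrier_mat n m" and c: "c \<in> carrier_vec m"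
    and nz: "\<forall>i<n. \<phi> i \<noteq> 0"
  shows "M_mat (P * B) \<phi> *\<^sub>v c = Ev P \<phi> n (B *\<^sub>v map_vec (\<lambda>a. [:a:]) c)"
proof -
  have PB: "P * B \<in> carrier_mat n m" using P B by simp
  let ?F = "(\<lambda>(i,\<alpha>,k). vec (dim_col (P * B)) (\<lambda>c. poly ((pderiv ^^ k) ((P * B) $$ (i,c))) \<alpha>))"
  have "M_mat (P * B) \<phi> *\<^sub>v c = mat_of_rows (dim_col (P * B)) (map ?F (Tl \<phi> n)) *\<^sub>v c"
    using M_mat_eq[of "P * B" n, OF carrier_matD(1)[OF PB]] by simp
  also have "\<dots> = vec (length (map ?F (Tl \<phi> n))) (\<lambda>r. map ?F (Tl \<phi> n) ! r \<bullet> c)"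
    by (rule mat_of_rows_mult_vec) (use PB c in auto)
  also have "\<dots> = Ev P \<phi> n (B *\<^sub>v map_vec (\<lambda>a. [:a:]) c)"
  proof (rule eq_vecI)
    fix r assume "r < dim_vec (Ev P \<phi> n (B *\<^sub>v map_vec (\<lambda>a. [:a:]) c))"
    then have r': "r < length (Tl \<phi> n)" by (simp add: Ev_def)
    obtain i \<alpha> k where t: "Tl \<phi> n ! r = (i,\<alpha>,k)" by (metis prod_cases3)
    have "(i,\<alpha>,k) \<in> set (Tl \<phi> n)" using t r' by (metis nth_mem)
    then have i: "i < n" by (rule Tl_fst)
    have cp: "map_vec (\<lambda>a. [:a:]) c \<in> carrier_vec m" using c by simp
    show "vec (length (map ?F (Tl \<phi> n))) (\<lambda>r. map ?F (Tl \<phi> n) ! r \<bullet> c) $ r =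
         Ev P \<phi> n (B *\<^sub>v map_vec (\<lambda>a. [:a:]) c) $ r"
      using r' t i scalar_row[OF PB c i] P B c assoc_mult_mat_vec[OF P B cp] PB
      by (simp add: Ev_def)
  qed (simp add: Ev_def)
  finally show ?thesis .
qed

lemma Ev_diff:
  assumes P: "P \<in> carrier_mat n n" and v: "v \<in> carrier_vec n" and w: "w \<in> carrier_vec n"
  shows "Ev P \<phi> n (v - w) = Ev P \<phi> n v - Ev P \<phi> n w"
proof (rule eq_vecI)
  fix r assume "r < dim_vec (Ev P \<phi> n v - Ev P \<phi> n w)"
  then have r: "r < length (Tl \<phi> n)" by (simp add: Ev_def)
  obtain i \<alpha> k where t: "Tl \<phi> n ! r = (i,\<alpha>,k)" by (metis prod_cases3)
  have "(i,\<alpha>,k) \<in> set (Tl \<phi> n)" using t r by (metis nth_mem)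
  then have i: "i < n" by (rule Tl_fst)
  show "Ev P \<phi> n (v - w) $ r = (Ev P \<phi> n v - Ev P \<phi> n w) $ r"
    unfolding Ev_def using mult_minus_distrib_mat_vec[OF P v w] P v w r t i
    by (simp add: funpow_pderiv_diff)
qed (simp add: Ev_def)

lemma Ev_zero_iff:
  fixes P :: "'a::{alg_closed_field,field_char_0} poly mat"
  assumes P: "P \<in> carrier_mat n n" and v: "v \<in> carrier_vec n" and nz: "\<forall>i<n. \<phi> i \<noteq> 0"
  shows "Ev P \<phi> n v = 0\<^sub>v (length (Tl \<phi> n)) \<longleftrightarrow> (\<forall>i<n. \<phi> i dvd (P *\<^sub>v v) $ i)"
proof -
  let ?f = "\<lambda>t. case t of (i,\<alpha>,k) \<Rightarrow> poly ((pderiv ^^ k) ((P *\<^sub>v v) $ i)) \<alpha>"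
  have "Ev P \<phi> n v = 0\<^sub>v (length (Tl \<phi> n)) \<longleftrightarrow> (\<forall>r<length (Tl \<phi> n). ?f (Tl \<phi> n ! r) = 0)"
    unfolding Ev_def vec_eq_iff by auto
  also have "\<dots> \<longleftrightarrow> (\<forall>t\<in>set (Tl \<phi> n). ?f t = 0)"
    by (simp add: all_set_conv_all_nth)
  also have "\<dots> \<longleftrightarrow> (\<forall>i<n. \<forall>\<alpha> k. k < order \<alpha> (\<phi> i) \<longrightarrow> poly ((pderiv ^^ k) ((P *\<^sub>v v) $ i)) \<alpha> = 0)"
    unfolding Tl_set[OF nz]
  proof (intro iffI allI impI ballI)
    fix i \<alpha> k assume H: "\<forall>t\<in>{(i, \<alpha>, k). i < n \<and> poly (\<phi> i) \<alpha> = 0 \<and> k < order \<alpha> (\<phi> i)}. ?f t = 0"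
      and i: "i < n" and k: "k < order \<alpha> (\<phi> i)"
    then have "poly (\<phi> i) \<alpha> = 0" using order_root by (metis less_nat_zero_code)
    then show "poly ((pderiv ^^ k) ((P *\<^sub>v v) $ i)) \<alpha> = 0" using H i k by auto
  next
    fix t assume H: "\<forall>i<n. \<forall>\<alpha> k. k < order \<alpha> (\<phi> i) \<longrightarrow> poly ((pderiv ^^ k) ((P *\<^sub>v v) $ i)) \<alpha> = 0"
      and t: "t \<in> {(i, \<alpha>, k). i < n \<and> poly (\<phi> i) \<alpha> = 0 \<and> k < order \<alpha> (\<phi> i)}"
    then show "?f t = 0" by auto
  qed
  also have "\<dots> \<longleftrightarrow> (\<forall>i<n. \<phi> i dvd (P *\<^sub>v v) $ i)"
    using hermite nz by blast
  finally show ?thesis .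
qed

lemma Bvec:
  assumes c: "c \<in> carrier_vec (n * s)"
  shows "block_row_powers n s *\<^sub>v map_vec (\<lambda>a. [:a:]) c = vec n (\<lambda>r. \<Sum>k<s. monom (c $ (k * n + r)) k)"
proof (rule eq_vecI)
  fix r assume "r < dim_vec (vec n (\<lambda>r. \<Sum>k<s. monom (c $ (k * n + r)) k))"
  then have r: "r < n" by simp
  have "(block_row_powers n s *\<^sub>v map_vec (\<lambda>a. [:a:]) c) $ r
     = (\<Sum>j\<in>{0..<n*s}. (if j mod n = r then monom (c $ j) (j div n) else 0))"
    using r c by (auto simp: block_row_powers_def scalar_prod_def row_def smult_monom intro!: sum.cong)
  also have "\<dots> = (\<Sum>j\<in>{j\<in>{0..<n*s}. j mod n = r}. monom (c $ j) (j div n))"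
    by (simp add: sum.inter_filter[symmetric])
  also have "{j\<in>{0..<n*s}. j mod n = r} = (\<lambda>k. k * n + r) ` {..<s}"
  proof (intro equalityI subsetI)
    fix j assume "j \<in> {j\<in>{0..<n*s}. j mod n = r}"
    then have "j = (j div n) * n + r" "j div n < s" using div_mult_mod_eq[of j n]
      by (auto simp: less_mult_imp_div_less mult.commute)
    then show "j \<in> (\<lambda>k. k * n + r) ` {..<s}" by blast
  next
    fix j assume "j \<in> (\<lambda>k. k * n + r) ` {..<s}"
    then obtain k where k: "k < s" "j = k * n + r" by auto
    have "k * n + r < (k + 1) * n" using r by simp
    also have "\<dots> \<le> s * n" using k by (intro mult_right_mono) auto
    finally show "j \<in> {j\<in>{0..<n*s}. j mod n = r}" using k r by (auto simp: mult.commute)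
  qed
  also have "(\<Sum>j\<in>(\<lambda>k. k * n + r) ` {..<s}. monom (c $ j) (j div n)) = (\<Sum>k<s. monom (c $ (k * n + r)) k)"
    using r by (subst sum.reindex) (auto simp: inj_on_def)
  finally show "(block_row_powers n s *\<^sub>v map_vec (\<lambda>a. [:a:]) c) $ r = vec n (\<lambda>r. \<Sum>k<s. monom (c $ (k * n + r)) k) $ r"
    using r by simp
qed (simp add: block_row_powers_def)



lemma inv_obtain:
  assumes "A \<in> carrier_mat n n" "invertible_mat A"
  obtains B where "B \<in> carrier_mat n n" "A * B = 1\<^sub>m n" "B * A = 1\<^sub>m n"
proof -
  from assms(2) obtain B where AB: "A * B = 1\<^sub>m (dim_row A)" "B * A = 1\<^sub>m (dim_row B)"
    unfolding invertible_mat_def inverts_mat_def by blast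
  have "dim_col B = n" using arg_cong[OF AB(1), of dim_col] assms(1) by simp
  moreover have "dim_row B = n" using arg_cong[OF AB(2), of dim_col] assms(1) by simp
  ultimately show ?thesis using that AB assms(1) by auto
qed

lemma invertible_det_unit:
  fixes A :: "'a::field poly mat"
  assumes "A \<in> carrier_mat n n" "invertible_mat A"
  shows "det A \<noteq> 0 \<and> degree (det A) = 0"
proof -
  obtain B where B: "B \<in> carrier_mat n n" "A * B = 1\<^sub>m n" "B * A = 1\<^sub>m n" using inv_obtain[OF assms] .
  have "det A * det B = 1" using det_mult[OF assms(1) B(1)] B(2) by simp
  then have "is_unit (det A)" by (metis dvd_triv_left)
  then have "det A \<noteq> 0" by auto
  then show ?thesis using \<open>is_unit (det A)\<close> is_unit_iff_degree by blast
qed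

lemma invertible_of_det_const:
  fixes W :: "'a::field poly mat"
  assumes W: "W \<in> carrier_mat n n" and d: "det W \<noteq> 0" "degree (det W) = 0"
  shows "invertible_mat W"
proof -
  obtain e where e: "det W = [:e:]" using d(2) degree_eq_zeroE by blast
  have e0: "e \<noteq> 0" using e d(1) by auto
  have ie: "[:inverse e:] * [:e:] = 1" "[:inverse e:] * ([:e:] * 1) = 1" using e0 by (simp_all add: one_pCons)
  define B where "B = [:inverse e:] \<cdot>\<^sub>m adj_mat W"
  have Bc: "B \<in> carrier_mat n n" using adj_mat(1)[OF W] by (simp add: B_def)
  have "W * B = [:inverse e:] \<cdot>\<^sub>m (W * adj_mat W)"
    unfolding B_def by (rule mult_smult_distrib[OF W adj_mat(1)[OF W]])
  also have "\<dots> = 1\<^sub>m n" unfolding adj_mat(2)[OF W] e using e0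
    by (intro eq_matI) (auto simp: ie)
  finally have 1: "W * B = 1\<^sub>m n" .
  have "B * W = [:inverse e:] \<cdot>\<^sub>m (adj_mat W * W)"
    unfolding B_def by (rule mult_smult_assoc_mat[OF adj_mat(1)[OF W] W])
  also have "\<dots> = 1\<^sub>m n" unfolding adj_mat(3)[OF W] e using e0
    by (intro eq_matI) (auto simp: ie)
  finally have 2: "B * W = 1\<^sub>m n" .
  show ?thesis unfolding invertible_mat_def inverts_mat_def using W Bc 1 2
    by (auto intro!: exI[of _ B])
qed

lemma diag_mult_vec:
  assumes "w \<in> carrier_vec n" "i < n"
  shows "(diag_poly_mat n \<phi> *\<^sub>v w) $ i = \<phi> i * w $ i"
proof -
  have "(diag_poly_mat n \<phi> *\<^sub>v w) $ i = (\<Sum>j\<in>{0..<n}. (if i = j then \<phi> i else 0) * w $ j)"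
    using assms by (simp add: diag_poly_mat_def scalar_prod_def row_def)
  also have "\<dots> = (\<Sum>j\<in>{0..<n}. if i = j then \<phi> i * w $ j else 0)" by (rule sum.cong) auto
  also have "\<dots> = \<phi> i * w $ i" using assms by simp
  finally show ?thesis .
qed

lemma det_diag:
  "det (diag_poly_mat n \<phi>) = (\<Prod>i<n. \<phi> i)"
proof -
  have "det (diag_poly_mat n \<phi>) = prod_list (diag_mat (diag_poly_mat n \<phi>))"
    by (rule det_upper_triangular) (auto simp: upper_triangular_def diag_poly_mat_def)
  also have "\<dots> = (\<Prod>i<n. \<phi> i)"
    by (simp add: diag_mat_def diag_poly_mat_def prod.distinct_set_conv_list[symmetric] atLeast0LessThan)
  finally show ?thesis .
qed



lemma ker_lemma:
  fixes A P Q :: "'a::field poly mat"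
  assumes A: "A \<in> carrier_mat n n" and P: "P \<in> carrier_mat n n" and Q: "Q \<in> carrier_mat n n"
    and P': "P' \<in> carrier_mat n n" "P' * P = 1\<^sub>m n"
    and Q': "Q' \<in> carrier_mat n n" "Q * Q' = 1\<^sub>m n"
    and smith: "P * A * Q = diag_poly_mat n \<phi>"
    and v: "v \<in> carrier_vec n"
  shows "(\<forall>i<n. \<phi> i dvd (P *\<^sub>v v) $ i) \<longleftrightarrow> (\<exists>u\<in>carrier_vec n. v = A *\<^sub>v u)"
proof
  assume H: "\<forall>i<n. \<phi> i dvd (P *\<^sub>v v) $ i"
  define w where "w = vec n (\<lambda>i. (P *\<^sub>v v) $ i div \<phi> i)"
  have w: "w \<in> carrier_vec n" by (simp add: w_def)
  have Pv: "P *\<^sub>v v = diag_poly_mat n \<phi> *\<^sub>v w"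
  proof (rule eq_vecI)
    fix i assume "i < dim_vec (diag_poly_mat n \<phi> *\<^sub>v w)"
    then have i: "i < n" by (simp add: diag_poly_mat_def)
    show "(P *\<^sub>v v) $ i = (diag_poly_mat n \<phi> *\<^sub>v w) $ i"
      using diag_mult_vec[OF w i] H i by (simp add: w_def dvd_mult_div_cancel)
  qed (use P in \<open>simp add: diag_poly_mat_def\<close>)
  have "v = (P' * P) *\<^sub>v v" using P'(2) v by simp
  also have "\<dots> = P' *\<^sub>v (P *\<^sub>v v)" using P'(1) P v by simp
  also have "\<dots> = P' *\<^sub>v ((P * A * Q) *\<^sub>v w)" unfolding Pv smith ..
  also have "\<dots> = (P' * (P * A * Q)) *\<^sub>v w"
  proof -
    have PAQc: "P * A * Q \<in> carrier_mat n n" using P A Q by simp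
    show ?thesis by (rule assoc_mult_mat_vec[symmetric, OF P'(1) PAQc w])
  qed
  also have "P' * (P * A * Q) = (P' * P) * A * Q"
  proof -
    have c: "P * A \<in> carrier_mat n n" "A * Q \<in> carrier_mat n n" "P' * P \<in> carrier_mat n n"
      "P' * P * A \<in> carrier_mat n n" "P' * (P * A) \<in> carrier_mat n n" using P'(1) P A Q by auto
    show ?thesis using P'(1) P A Q c by (simp add: assoc_mult_mat[of _ n n _ n _ n])
  qed
  also have "\<dots> = A * Q" using P'(2) A Q by simp
  also have "(A * Q) *\<^sub>v w = A *\<^sub>v (Q *\<^sub>v w)" using A Q w by simp
  finally show "\<exists>u\<in>carrier_vec n. v = A *\<^sub>v u" using Q w by auto
next
  assume "\<exists>u\<in>carrier_vec n. v = A *\<^sub>v u"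
  then obtain u where u: "u \<in> carrier_vec n" "v = A *\<^sub>v u" by blast
  have "P *\<^sub>v v = (P * A) *\<^sub>v u" using u P A by simp
  also have "P * A = (P * A * Q) * Q'"
  proof -
    have c: "P * A \<in> carrier_mat n n" using P A by auto
    have "(P * A * Q) * Q' = (P * A) * (Q * Q')" using c Q Q'(1) by (rule assoc_mult_mat)
    then show ?thesis using Q'(2) c right_mult_one_mat[OF c] by simp
  qed
  also have "(P * A * Q) * Q' *\<^sub>v u = diag_poly_mat n \<phi> *\<^sub>v (Q' *\<^sub>v u)"
    unfolding smith by (rule assoc_mult_mat_vec[of _ n n, OF _ Q'(1) u(1)]) (simp add: diag_poly_mat_def)
  finally have Pv: "P *\<^sub>v v = diag_poly_mat n \<phi> *\<^sub>v (Q' *\<^sub>v u)" .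
  show "\<forall>i<n. \<phi> i dvd (P *\<^sub>v v) $ i"
    using diag_mult_vec[of "Q' *\<^sub>v u" n] Q' u unfolding Pv by simp
qed



definition bv :: "nat \<Rightarrow> nat \<Rightarrow> 'a::comm_ring_1 vec \<Rightarrow> 'a poly vec" where
  "bv n s c = vec n (\<lambda>r. \<Sum>k<s. monom (c $ (k * n + r)) k)"

lemma bv_coeff:
  assumes j: "j < n * s"
  shows "coeff (bv n s c $ (j mod n)) (j div n) = c $ j"
proof -
  have n: "n > 0" using j by (cases n) auto
  have js: "j div n < s" using j by (simp add: less_mult_imp_div_less mult.commute)
  have "coeff (bv n s c $ (j mod n)) (j div n) = (\<Sum>k<s. if k = j div n then c $ (k * n + j mod n) else 0)"
  proof -
    have jm: "j mod n < n" using n by simp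
    have "bv n s c $ (j mod n) = (\<Sum>k<s. monom (c $ (k * n + j mod n)) k)"
      unfolding bv_def using jm by (rule index_vec)
    then have "coeff (bv n s c $ (j mod n)) (j div n) = (\<Sum>k<s. coeff (monom (c $ (k * n + j mod n)) k) (j div n))"
      by (simp only: coeff_sum)
    also have "\<dots> = (\<Sum>k<s. if k = j div n then c $ (k * n + j mod n) else 0)"
      by (rule sum.cong) (simp_all only: coeff_monom)
    finally show ?thesis .
  qed
  also have "\<dots> = c $ (j div n * n + j mod n)" using js by simp
  also have "j div n * n + j mod n = j" by simp
  finally show ?thesis .
qed

lemma bv_degree: "s \<ge> 1 \<Longrightarrow> r < n \<Longrightarrow> degree (bv n s (c :: 'a::field vec) $ r) < s"
proof -
  assume s: "s \<ge> 1" and r: "r < n"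
  have "bv n s c $ r = (\<Sum>k<s. monom (c $ (k * n + r)) k)" unfolding bv_def using r by (rule index_vec)
  then show ?thesis using degree_R[OF s] by simp
qed

theorem main:
  fixes A P Q :: "'a::{alg_closed_field, field_char_0} poly mat"
    and \<phi> :: "nat \<Rightarrow> 'a poly"
    and n s :: nat
  assumes A: "A \<in> carrier_mat n n" and nonsing: "det A \<noteq> 0"
    and P: "P \<in> carrier_mat n n" "invertible_mat P"
    and Q: "Q \<in> carrier_mat n n" "invertible_mat Q"
    and monic: "\<And>i. i < n \<Longrightarrow> lead_coeff (\<phi> i) = 1"
    and divides: "\<And>i. Suc i < n \<Longrightarrow> \<phi> i dvd \<phi> (Suc i)"
    and smith: "P * A * Q = diag_poly_mat n \<phi>"
    and s: "s \<ge> 1"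
  shows "(\<exists>U D. U \<in> carrier_mat n n \<and> invertible_mat U \<and> (\<forall>k<s. D k \<in> carrier_mat n n)
              \<and> A * U = monic_mat_poly n s D)
         \<longleftrightarrow> (degree (det A) = n * s \<and> det (M_mat (P * block_row_powers n s) \<phi>) \<noteq> 0)"
proof -
  have nz: "\<forall>i<n. \<phi> i \<noteq> 0"
  proof (intro allI impI)
    fix i assume "i < n"
    from monic[OF this] show "\<phi> i \<noteq> 0" by (metis leading_coeff_0_iff zero_neq_one)
  qed
  obtain P' where P': "P' \<in> carrier_mat n n" "P * P' = 1\<^sub>m n" "P' * P = 1\<^sub>m n" using inv_obtain[OF P] .
  obtain Q' where Q': "Q' \<in> carrier_mat n n" "Q * Q' = 1\<^sub>m n" "Q' * Q = 1\<^sub>m n" using inv_obtain[OF Q] .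
  define B :: "'a poly mat" where "B = block_row_powers n s"
  have Bc: "B \<in> carrier_mat n (n * s)" by (simp add: B_def block_row_powers_def)
  define M where "M = M_mat (P * B) \<phi>"
  define T where "T = Tl \<phi> n"
  have Mc: "M \<in> carrier_mat (length T) (n * s)"
  proof -
    have dr: "dim_row (P * B) = n" "dim_col (P * B) = n * s" using P Bc by auto
    show ?thesis unfolding M_def T_def M_mat_eq[OF dr(1)] dr(2) using mat_of_rows_carrier(1) length_map by metis
  qed
  have lenT: "length T = (\<Sum>i<n. degree (\<phi> i))" unfolding T_def by (rule Tl_length[OF nz])
  have degA: "degree (det A) = (\<Sum>i<n. degree (\<phi> i))"
  proof -
    have PA: "P * A \<in> carrier_mat n n" using P A by simp
    have "det (P * A * Q) = det P * det A * det Q"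
      unfolding det_mult[OF PA Q(1)] det_mult[OF P(1) A] ..
    also have "det (P * A * Q) = (\<Prod>i<n. \<phi> i)" unfolding smith det_diag ..
    finally have e: "det P * det A * det Q = (\<Prod>i<n. \<phi> i)" by simp
    have "degree (\<Prod>i<n. \<phi> i) = (\<Sum>i<n. degree (\<phi> i))"
      by (rule degree_prod_eq_sum_degree) (use nz in auto)
    moreover have "degree (det P * det A * det Q) = degree (det A)"
    proof -
      have a: "det P \<noteq> 0" "degree (det P) = 0" "det Q \<noteq> 0" "degree (det Q) = 0"
        using invertible_det_unit[OF P] invertible_det_unit[OF Q] by auto
      have b: "det P * det A \<noteq> 0" using a(1) nonsing by simp
      have "degree (det P * det A * det Q) = degree (det P * det A) + degree (det Q)"
        by (rule degree_mult_eq[OF b a(3)])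
      also have "degree (det P * det A) = degree (det P) + degree (det A)"
        by (rule degree_mult_eq[OF a(1) nonsing])
      finally show ?thesis using a by simp
    qed
    ultimately show ?thesis using e by metis
  qed
  have lenA: "length T = degree (det A)" using lenT degA by simp
  have EvM: "M *\<^sub>v c = Ev P \<phi> n (bv n s c)" if c: "c \<in> carrier_vec (n * s)" for c
  proof -
    have "M *\<^sub>v c = Ev P \<phi> n (B *\<^sub>v map_vec (\<lambda>a. [:a:]) c)" unfolding M_def by (rule Ev_M[OF P(1) Bc c nz])
    also have "B *\<^sub>v map_vec (\<lambda>a. [:a:]) c = bv n s c" unfolding B_def bv_def by (rule Bvec[OF c])
    finally show ?thesis .
  qed
  have KER: "Ev P \<phi> n v = 0\<^sub>v (length T) \<longleftrightarrow> (\<exists>u\<in>carrier_vec n. v = A *\<^sub>v u)"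
    if v: "v \<in> carrier_vec n" for v
    unfolding T_def by (rule trans[OF Ev_zero_iff[OF P(1) v nz] ker_lemma[OF A P(1) Q(1) P'(1,3) Q'(1,2) smith v]])
  show ?thesis
  proof
    assume "\<exists>U D. U \<in> carrier_mat n n \<and> invertible_mat U \<and> (\<forall>k<s. D k \<in> carrier_mat n n)
              \<and> A * U = monic_mat_poly n s D"
    then obtain U D where U: "U \<in> carrier_mat n n" "invertible_mat U"
      and AU: "A * U = monic_mat_poly n s D" by blast
    define L where "L = monic_mat_poly n s D"
    have Lc: "L \<in> carrier_mat n n" by (simp add: L_def monic_mat_poly_def)
    have dL: "degree (det L) = n * s" "det L \<noteq> 0" using det_monic[OF s, of n D] by (auto simp: L_def)
    have dAU: "det L = det A * det U" unfolding L_def AU[symmetric] by (rule det_mult[OF A U(1)])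
    have dU: "det U \<noteq> 0" "degree (det U) = 0" using invertible_det_unit[OF U] by auto
    have dA: "degree (det A) = n * s"
      using dL(1) unfolding dAU degree_mult_eq[OF nonsing dU(1)] dU(2) by simp
    have Msq: "M \<in> carrier_mat (n * s) (n * s)" using Mc lenA dA by simp
    have "det M \<noteq> 0"
    proof
      assume "det M = 0"
      then obtain c where c: "c \<in> carrier_vec (n * s)" "c \<noteq> 0\<^sub>v (n * s)" "M *\<^sub>v c = 0\<^sub>v (n * s)"
        using det_0_iff_vec_prod_zero_field[OF Msq] by blast
      have bvc: "bv n s c \<in> carrier_vec n" by (simp add: bv_def)
      have "Ev P \<phi> n (bv n s c) = 0\<^sub>v (length T)" using EvM[OF c(1)] c(3) lenA dA by simp
      then obtain u where u: "u \<in> carrier_vec n" "bv n s c = A *\<^sub>v u" using KER[OF bvc] by blast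
      obtain U' where U': "U' \<in> carrier_mat n n" "U * U' = 1\<^sub>m n" "U' * U = 1\<^sub>m n" using inv_obtain[OF U] .
      define w where "w = U' *\<^sub>v u"
      have w: "w \<in> carrier_vec n" using U'(1) u(1) by (simp add: w_def)
      have "A *\<^sub>v u = A *\<^sub>v ((U * U') *\<^sub>v u)" using U'(2) u(1) by simp
      also have "\<dots> = (A * U) *\<^sub>v w" using A U(1) U'(1) u(1) by (simp add: w_def)
      finally have bL: "bv n s c = L *\<^sub>v w" using u(2) AU by (simp add: L_def)
      have "w = 0\<^sub>v n"
        by (rule monic_mult_vec_zero[OF s w, of D]) (use bL[unfolded L_def, symmetric] bv_degree[OF s] in simp)
      then have b0: "bv n s c = 0\<^sub>v n" using bL Lc by (auto intro!: eq_vecI simp: scalar_prod_def)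
      have "c = 0\<^sub>v (n * s)"
      proof (rule eq_vecI)
        fix j assume "j < dim_vec (0\<^sub>v (n * s) :: 'a vec)"
        then have j: "j < n * s" by simp
        have "c $ j = coeff (bv n s c $ (j mod n)) (j div n)" using bv_coeff[OF j, of c] by simp
        also have "\<dots> = 0" using b0 j by (cases n) auto
        finally show "c $ j = 0\<^sub>v (n * s) $ j" using j by simp
      qed (use c(1) in simp)
      then show False using c(2) by simp
    qed
    then show "degree (det A) = n * s \<and> det (M_mat (P * block_row_powers n s) \<phi>) \<noteq> 0"
      using dA by (simp add: M_def B_def)
  next
    assume H: "degree (det A) = n * s \<and> det (M_mat (P * block_row_powers n s) \<phi>) \<noteq> 0"
    show "\<exists>U D. U \<in> carrier_mat n n \<and> invertible_mat U \<and> (\<forall>k<s. D k \<in> carrier_mat n n)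
              \<and> A * U = monic_mat_poly n s D"
    proof -
      have dA: "degree (det A) = n * s" using H by simp
      have dM: "det M \<noteq> 0" using H by (simp add: M_def B_def)
      have Msq: "M \<in> carrier_mat (n * s) (n * s)" using Mc lenA dA by simp
      obtain M' where M': "M' \<in> carrier_mat (n * s) (n * s)" "M * M' = 1\<^sub>m (n * s)"
        using det_non_zero_imp_unit[OF Msq dM, of undefined] by (auto simp: Units_def ring_mat_def)
      define ev :: "nat \<Rightarrow> 'a poly vec" where "ev i = vec n (\<lambda>r. if r = i then monom 1 s else 0)" for i
      have evc: "ev i \<in> carrier_vec n" for i by (simp add: ev_def)
      have Evc: "Ev P \<phi> n v \<in> carrier_vec (n * s)" for v using lenA dA by (simp add: Ev_def T_def)
      define cc where "cc i = M' *\<^sub>v Ev P \<phi> n (ev i)" for i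
      have ccc: "cc i \<in> carrier_vec (n * s)" for i using M'(1) Evc by (simp add: cc_def)
      have Mcc: "M *\<^sub>v cc i = Ev P \<phi> n (ev i)" for i
      proof -
        have "M *\<^sub>v cc i = (M * M') *\<^sub>v Ev P \<phi> n (ev i)"
          unfolding cc_def by (rule assoc_mult_mat_vec[symmetric, OF Msq M'(1) Evc])
        then show ?thesis using M'(2) Evc by simp
      qed
      define D where "D k = mat n n (\<lambda>(r,i). cc i $ (k * n + r))" for k
      define L where "L = monic_mat_poly n s D"
      have Lc: "L \<in> carrier_mat n n" by (simp add: L_def monic_mat_poly_def)
      define colv where "colv i = vec n (\<lambda>r. L $$ (r,i))" for i
      have colv: "colv i = ev i - bv n s (cc i)" if i: "i < n" for i
        by (rule eq_vecI) (use i in \<open>simp_all add: colv_def L_def monic_entry ev_def bv_def D_def\<close>)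
      have "\<exists>u. u \<in> carrier_vec n \<and> colv i = A *\<^sub>v u" if i: "i < n" for i
      proof -
        have bvc: "bv n s (cc i) \<in> carrier_vec n" by (simp add: bv_def)
        have "Ev P \<phi> n (colv i) = Ev P \<phi> n (ev i) - Ev P \<phi> n (bv n s (cc i))"
          unfolding colv[OF i] by (rule Ev_diff[OF P(1) evc bvc])
        also have "\<dots> = 0\<^sub>v (length T)"
          unfolding EvM[OF ccc, symmetric] Mcc using Evc lenA dA by (auto intro!: eq_vecI)
        finally have "Ev P \<phi> n (colv i) = 0\<^sub>v (length T)" .
        moreover have "colv i \<in> carrier_vec n" by (simp add: colv_def)
        ultimately show ?thesis using KER by blast
      qed
      then obtain W where W: "\<And>i. i < n \<Longrightarrow> W i \<in> carrier_vec n \<and> colv i = A *\<^sub>v W i" by metis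
      define Wm where "Wm = mat n n (\<lambda>(r,i). W i $ r)"
      have Wc: "Wm \<in> carrier_mat n n" by (simp add: Wm_def)
      have AW: "A * Wm = L"
      proof (rule eq_matI)
        fix r i assume r: "r < dim_row L" and i: "i < dim_col L"
        then have r': "r < n" and i': "i < n" using Lc by auto
        have "col Wm i = W i" using W[OF i'] i' by (auto simp: Wm_def intro!: eq_vecI)
        then have "(A * Wm) $$ (r,i) = (A *\<^sub>v W i) $ r" using A Wc r' i' by simp
        also have "\<dots> = colv i $ r" using W[OF i'] by simp
        also have "\<dots> = L $$ (r,i)" using r' by (simp add: colv_def)
        finally show "(A * Wm) $$ (r,i) = L $$ (r,i)" .
      qed (use A Wc Lc in auto)
      have dL: "degree (det L) = n * s" "det L \<noteq> 0" using det_monic[OF s, of n D] by (auto simp: L_def)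
      have dLW: "det L = det A * det Wm" unfolding AW[symmetric] by (rule det_mult[OF A Wc])
      have dW0: "det Wm \<noteq> 0" using dL(2) dLW by auto
      have "degree (det Wm) = 0" using dL(1) dA unfolding dLW degree_mult_eq[OF nonsing dW0] by simp
      then have "invertible_mat Wm" by (rule invertible_of_det_const[OF Wc dW0])
      moreover have "\<forall>k<s. D k \<in> carrier_mat n n" by (simp add: D_def)
      ultimately show ?thesis using Wc AW by (auto simp: L_def)
    qed
  qed
qed

theorem theorem5p12:
  fixes A P Q :: "'a::{alg_closed_field, field_char_0} poly mat"
    and \<phi> :: "nat \<Rightarrow> 'a poly"
    and n s :: nat
  assumes A: "A \<in> carrier_mat n n" and nonsing: "det A \<noteq> 0"
    and P: "P \<in> carrier_mat n n" "invertible_mat P"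
    and Q: "Q \<in> carrier_mat n n" "invertible_mat Q"
    and monic: "\<And>i. i < n \<Longrightarrow> lead_coeff (\<phi> i) = 1"
    and divides: "\<And>i. Suc i < n \<Longrightarrow> \<phi> i dvd \<phi> (Suc i)"
    and smith: "P * A * Q = diag_poly_mat n \<phi>"
    and s: "s \<ge> 1"
  shows "(\<exists>U D. U \<in> carrier_mat n n \<and> invertible_mat U \<and> (\<forall>k<s. D k \<in> carrier_mat n n)
              \<and> A * U = monic_mat_poly n s D)
         \<longleftrightarrow> (degree (det A) = n * s \<and> det (M_mat (P * block_row_powers n s) \<phi>) \<noteq> 0)"
    by (rule main[OF assms])

end
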